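(* Let $a<b$, $\alpha\in(0,1)$, fix $n\in\mathbb{N}$ and let $x\in C^n[a,b]$. Then, for $t\in(a,b]$, \begin{multline*} {_aD_t^\alpha} x(t)=\frac{1}{\Gamma(1-\alpha)}(t-a)^{-\alpha}x(t)+\sum_{i=1}^{n-1}A(\alpha,i)(t-a)^{i-\alpha}x^{(i)}(t)\\ +\sum_{p=n}^{\infty}\left[\frac{-\Gamma(p-n+1+\alpha)}{\Gamma(-\alpha)\Gamma(1+\alpha)(p-n+1)!}(t-a)^{-\alpha}x(t)+ B(\alpha,p)(t-a)^{n-1-p-\alpha}V_p(t)\right], \end{multline*} where \[ A(\alpha,i)=\frac{1}{\Gamma(i+1-\alpha)}\left[1+\sum_{p=n-i}^{\infty}\frac{\Gamma(p-n+1+\alpha)}{\Gamma(\alpha-i)(p-n+i+1)!}\right],\quad i=1,\ldots,n-1, \] \[ B(\alpha,p)=\frac{\Gamma(p-n+1+\alpha)}{\Gamma(-\alpha)\Gamma(1+\alpha)(p-n+1)!},\qquad V_p(t)=(p-n+1)\int_a^t (\tau-a)^{p-n}x(\tau)\,d\tau . \]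
   Context: For $\alpha\in(0,1)$ and a function $x$ on $[a,b]$, the left Riemann--Liouville fractional derivative is ${_aD_t^\alpha} x(t)=\frac{1}{\Gamma(1-\alpha)}\frac{d}{dt}\int_a^t (t-\tau)^{-\alpha}x(\tau)\,d\tau$. $\Gamma$ denotes Euler's gamma function. *)

theory Defs
  imports "HOL-Analysis.Analysis"
begin

definition Cn_on :: "nat \<Rightarrow> real \<Rightarrow> real \<Rightarrow> (real \<Rightarrow> real) \<Rightarrow> (nat \<Rightarrow> real \<Rightarrow> real) \<Rightarrow> bool" where
  "Cn_on n a b x D \<longleftrightarrow>
     (\<forall>t\<in>{a..b}. D 0 t = x t) \<and>
     (\<forall>i<n. \<forall>t\<in>{a..b}. (D i has_real_derivative D (Suc i) t) (at t within {a..b})) \<and>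
     continuous_on {a..b} (D n)"

definition RL_deriv_at :: "real \<Rightarrow> real \<Rightarrow> real \<Rightarrow> (real \<Rightarrow> real) \<Rightarrow> real \<Rightarrow> real \<Rightarrow> bool" where
  "RL_deriv_at a b \<alpha> x t L \<longleftrightarrow>
     ((\<lambda>s. (1 / Gamma (1 - \<alpha>)) * integral {a..s} (\<lambda>\<tau>. (s - \<tau>) powr (-\<alpha>) * x \<tau>))
        has_real_derivative L) (at t within {a..b})"

text \<open>A(alpha,i), with the sum over p = n-i, n-i+1, ... reindexed by k = p-(n-i),
  so that p-n+1 = k+1-i and p-n+i+1 = k+1.\<close>
definition A_coef :: "nat \<Rightarrow> real \<Rightarrow> nat \<Rightarrow> real" where
  "A_coef n \<alpha> i = (1 / Gamma (real i + 1 - \<alpha>)) *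
     (1 + (\<Sum>k. Gamma (real k + 1 - real i + \<alpha>) / (Gamma (\<alpha> - real i) * fact (k + 1))))"

text \<open>B(alpha,p) for p = n + k, so p-n+1 = k+1.\<close>
definition B_coef :: "real \<Rightarrow> nat \<Rightarrow> real" where
  "B_coef \<alpha> k = Gamma (real k + 1 + \<alpha>) / (Gamma (-\<alpha>) * Gamma (1 + \<alpha>) * fact (k + 1))"

text \<open>V_p(t) for p = n + k: (p-n+1) int_a^t (tau-a)^(p-n) x(tau) dtau.\<close>
definition V_fun :: "real \<Rightarrow> (real \<Rightarrow> real) \<Rightarrow> nat \<Rightarrow> real \<Rightarrow> real" where
  "V_fun a x k t = real (k + 1) * integral {a..t} (\<lambda>\<tau>. (\<tau> - a) ^ k * x \<tau>)"

end

theory Submission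
  imports Defs
begin

lemma Gamma_ratio_lim0:
  fixes \<beta> :: real
  assumes "\<beta> < 0" "\<beta> \<notin> \<int>\<^sub>\<le>\<^sub>0"
  shows "(\<lambda>N. Gamma (real N + 1 + \<beta>) / fact N) \<longlonglongrightarrow> 0"
proof -
  have ev: "eventually (\<lambda>N. Gamma \<beta> * rGamma_series \<beta> N * real N powr \<beta> = Gamma (real N + 1 + \<beta>) / fact N) sequentially"
    using eventually_gt_at_top[of "0::nat"]
  proof eventually_elim
    case (elim N)
    have "pochhammer \<beta> (N+1) = Gamma (\<beta> + of_nat (N+1)) / Gamma \<beta>"
      by (rule pochhammer_Gamma[OF assms(2)])
    moreover have "Gamma \<beta> \<noteq> 0" using assms Gamma_eq_zero_iff by blast
    moreover have "exp (\<beta> * ln (real N)) = real N powr \<beta>" using elim by (simp add: powr_def)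
    ultimately show ?case
      by (simp add: rGamma_series_def powr_def field_simps)
  qed
  have "(\<lambda>N. Gamma \<beta> * rGamma_series \<beta> N * real N powr \<beta>) \<longlonglongrightarrow> Gamma \<beta> * rGamma \<beta> * 0"
    by (intro tendsto_intros tendsto_neg_powr assms(1) filterlim_real_sequentially)
  then have "(\<lambda>N. Gamma \<beta> * rGamma_series \<beta> N * real N powr \<beta>) \<longlonglongrightarrow> 0" by simp
  then show ?thesis using ev by (rule Lim_transform_eventually)
qed

lemma A_series_sums:
  fixes \<alpha> :: real and i :: nat
  assumes "0 < \<alpha>" "\<alpha> < 1" "1 \<le> i"
  shows "(\<lambda>k. Gamma (real k + 1 - real i + \<alpha>) / (Gamma (\<alpha> - real i) * fact (k + 1))) sums (-1)"
proof -
  define \<beta> where "\<beta> = \<alpha> - real i"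
  have bneg: "\<beta> < 0" using assms by (simp add: \<beta>_def)
  have nonint: "\<beta> + real m \<notin> \<int>\<^sub>\<le>\<^sub>0" for m
  proof
    assume "\<beta> + real m \<in> \<int>\<^sub>\<le>\<^sub>0"
    then obtain z :: int where z: "\<beta> + real m = of_int z" by (auto elim: nonpos_Ints_cases)
    then have "\<alpha> = of_int (z + int i - int m)" by (simp add: \<beta>_def)
    then have "0 < z + int i - int m" "z + int i - int m < 1" using assms by (metis of_int_0_less_iff, metis of_int_less_1_iff)
    then show False by linarith
  qed
  have nb: "\<beta> \<notin> \<int>\<^sub>\<le>\<^sub>0" using nonint[of 0] by simp
  have G0: "Gamma \<beta> \<noteq> 0" using nb Gamma_eq_zero_iff by blast
  have ps: "(\<Sum>k<N. Gamma (real k + 1 + \<beta>) / fact (k + 1)) = Gamma (real N + 1 + \<beta>) / (\<beta> * fact N) - Gamma \<beta>" for N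
  proof (induction N)
    case 0
    have "Gamma (\<beta> + 1) = \<beta> * Gamma \<beta>" by (rule Gamma_plus1[OF nb])
    then show ?case using bneg by (simp add: add.commute)
  next
    case (Suc N)
    have "Gamma ((real N + 1 + \<beta>) + 1) = (real N + 1 + \<beta>) * Gamma (real N + 1 + \<beta>)"
      by (rule Gamma_plus1) (use nonint[of "N+1"] in \<open>simp add: add_ac\<close>)
    then have e: "Gamma (real (Suc N) + 1 + \<beta>) = (real N + 1 + \<beta>) * Gamma (real N + 1 + \<beta>)"
      by (simp add: add_ac)
    define G where "G = Gamma (real N + 1 + \<beta>)"
    have "(\<Sum>k<Suc N. Gamma (real k + 1 + \<beta>) / fact (k + 1)) = G / (\<beta> * fact N) - Gamma \<beta> + G / fact (Suc N)"
      using Suc by (simp add: G_def)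
    also have "\<dots> = (real N + 1 + \<beta>) * G / (\<beta> * fact (Suc N)) - Gamma \<beta>"
    proof -
      have fS: "fact (Suc N) = (real N + 1) * (fact N :: real)" by simp
      have alg: "G / (\<beta> * F) + G / (m * F) = m' * G / (\<beta> * (m * F))"
        if "F > 0" "m > 0" "\<beta> \<noteq> 0" "m' = m + \<beta>" for F m m' :: real
        using that by (simp add: field_simps)
      show ?thesis unfolding fS using alg[of "fact N" "real N + 1" "real N + 1 + \<beta>"] bneg by simp
    qed
    also have "\<dots> = Gamma (real (Suc N) + 1 + \<beta>) / (\<beta> * fact (Suc N)) - Gamma \<beta>"
      by (simp only: e G_def)
    finally show ?case .
  qed
  have "(\<lambda>N. Gamma (real N + 1 + \<beta>) / fact N / \<beta> - Gamma \<beta>) \<longlonglongrightarrow> 0 / \<beta> - Gamma \<beta>"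
    using bneg by (intro tendsto_intros Gamma_ratio_lim0 bneg nb) auto
  moreover have "(\<lambda>N. Gamma (real N + 1 + \<beta>) / fact N / \<beta> - Gamma \<beta>) = (\<lambda>N. \<Sum>k<N. Gamma (real k + 1 + \<beta>) / fact (k + 1))"
    by (rule ext, subst ps) (simp add: field_simps)
  ultimately have "(\<lambda>N. (\<Sum>k<N. Gamma (real k + 1 + \<beta>) / fact (k + 1)) / Gamma \<beta>) \<longlonglongrightarrow> (0 / \<beta> - Gamma \<beta>) / Gamma \<beta>"
    by (intro tendsto_divide G0) auto
  then have "(\<lambda>N. (\<Sum>k<N. Gamma (real k + 1 + \<beta>) / (Gamma \<beta> * fact (k + 1)))) \<longlonglongrightarrow> -1"
    using G0 by (simp only: sum_divide_distrib divide_divide_eq_left mult.commute) simp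
  then show ?thesis unfolding sums_def \<beta>_def by (simp add: algebra_simps)
qed

lemma binom_sums:
  fixes \<alpha> r :: real
  assumes "0 < \<alpha>" "0 \<le> r" "r < 1"
  shows "(\<lambda>m. Gamma (real m + \<alpha>) / (Gamma \<alpha> * fact m) * r ^ m) sums (1 - r) powr (-\<alpha>)"
proof -
  have "(\<lambda>m. ((-\<alpha>) gchoose m) * (-r) ^ m) sums (1 + (-r)) powr (-\<alpha>)"
    by (rule gen_binomial_real) (use assms in auto)
  moreover have "((-\<alpha>) gchoose m) * (-r) ^ m = Gamma (real m + \<alpha>) / (Gamma \<alpha> * fact m) * r ^ m" for m
  proof -
    have na: "\<alpha> \<notin> \<int>\<^sub>\<le>\<^sub>0" using assms(1) by (auto elim: nonpos_Ints_cases)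
    have "((-\<alpha>) gchoose m) * (-r) ^ m = ((-1)^m * (-1)^m) * pochhammer \<alpha> m / fact m * r ^ m"
      by (simp add: gbinomial_pochhammer power_minus[of r])
    also have "((-1::real)^m * (-1)^m) = 1" by (simp flip: power_add)
    finally show ?thesis using pochhammer_Gamma[OF na, of m] by (simp add: add.commute)
  qed
  ultimately show ?thesis by simp
qed


lemma frac_subst:
  fixes f :: "real \<Rightarrow> real" and \<alpha> a s :: real
  assumes al: "0 < \<alpha>" "\<alpha> < 1" and as: "a < s" and fc: "continuous_on {a..s} f"
  shows "((\<lambda>\<tau>. (s - \<tau>) powr (-\<alpha>) * f \<tau>) has_integral
           ((s - a) powr (1 - \<alpha>) / (1 - \<alpha>) * integral {0..1} (\<lambda>v. f (s - (s - a) * v powr (1 / (1 - \<alpha>)))))) {a..s}"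
proof -
  define q where "q = 1 / (1 - \<alpha>)"
  have q0: "q > 0" using al by (simp add: q_def)
  define g where "g = (\<lambda>\<tau>. ((s - \<tau>) / (s - a)) powr (1 - \<alpha>))"
  define g' where "g' = (\<lambda>\<tau>. (1 - \<alpha>) * ((s - \<tau>) / (s - a)) powr (1 - \<alpha> - 1) * (- 1 / (s - a)))"
  define F where "F = (\<lambda>v. f (s - (s - a) * v powr q))"
  have sub: "g ` {a..s} \<subseteq> {0..1}"
  proof
    fix y assume "y \<in> g ` {a..s}"
    then obtain \<tau> where t: "\<tau> \<in> {a..s}" "y = g \<tau>" by auto
    have "0 \<le> (s - \<tau>) / (s - a)" "(s - \<tau>) / (s - a) \<le> 1" using t as by (auto simp: field_simps)
    then show "y \<in> {0..1}" using t al by (auto simp: g_def intro!: powr_le1)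
  qed
  have Fc: "continuous_on {0..1} F"
  proof -
    have c1: "continuous_on {0..1} (\<lambda>v. s - (s - a) * v powr q)"
      using q0 by (intro continuous_intros continuous_on_powr') auto
    have im: "(\<lambda>v. s - (s - a) * v powr q) ` {0..1} \<subseteq> {a..s}"
    proof
      fix y assume "y \<in> (\<lambda>v. s - (s - a) * v powr q) ` {0..1}"
      then obtain v where v: "v \<in> {0..1}" "y = s - (s - a) * v powr q" by auto
      have "0 \<le> v powr q" "v powr q \<le> 1" using v q0 by (auto intro!: powr_le1)
      then have "0 \<le> (s - a) * v powr q" "(s - a) * v powr q \<le> s - a" using as by (auto intro: mult_left_le)
      then show "y \<in> {a..s}" using v by auto
    qed
    show ?thesis unfolding F_def by (rule continuous_on_compose2[OF fc c1 im])
  qed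
  have gc: "continuous_on {a..s} g"
    unfolding g_def using al as by (intro continuous_intros continuous_on_powr') (auto simp: field_simps)
  have gd: "(g has_field_derivative g' \<tau>) (at \<tau> within {a..s})" if "\<tau> \<in> {a..s} - {s}" for \<tau>
  proof -
    have "0 < (s - \<tau>) / (s - a)" using that as by auto
    moreover have "((\<lambda>\<tau>. (s - \<tau>) / (s - a)) has_real_derivative (-1 / (s - a))) (at \<tau> within {a..s})"
      by (rule DERIV_cdivide) (auto intro!: derivative_eq_intros)
    ultimately show ?thesis unfolding g_def g'_def
      by (rule DERIV_chain2[OF has_real_derivative_powr])
  qed
  have main: "((\<lambda>\<tau>. g' \<tau> *\<^sub>R F (g \<tau>)) has_integral (integral {g a..g s} F - integral {g s..g a} F)) {a..s}"
    by (rule has_integral_substitution_general[OF _ _ sub Fc gc gd, of "{s}"]) (use as in auto)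
  have ga: "g a = 1" and gs: "g s = 0" using as by (auto simp: g_def)
  have Fg: "F (g \<tau>) = f \<tau>" if "\<tau> \<in> {a..s}" for \<tau>
  proof -
    have "g \<tau> powr q = (s - \<tau>) / (s - a)"
      using that as al by (auto simp: g_def q_def powr_powr)
    then show ?thesis using as by (simp add: F_def)
  qed
  have g'e: "g' \<tau> = - (1 - \<alpha>) / (s - a) powr (1 - \<alpha>) * (s - \<tau>) powr (-\<alpha>)" for \<tau>
  proof -
    have "(s - a) powr (1 - \<alpha>) = (s - a) * (s - a) powr (-\<alpha>)"
      using as by (simp add: powr_add[of "s - a" 1 "-\<alpha>", simplified])
    moreover have "g' \<tau> = (1 - \<alpha>) * ((s - \<tau>) powr (-\<alpha>) / (s - a) powr (-\<alpha>)) * (-1 / (s - a))"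
      by (simp add: g'_def powr_divide)
    moreover have "(1 - \<alpha>) * (X / P) * (-1 / d) = - (1 - \<alpha>) / (d * P) * X" if "P > 0" "d > 0" for X P d :: real
      using that by (simp add: field_simps)
    ultimately show ?thesis using as by simp
  qed
  have "((\<lambda>\<tau>. - (1 - \<alpha>) / (s - a) powr (1 - \<alpha>) * ((s - \<tau>) powr (-\<alpha>) * f \<tau>)) has_integral (- integral {0..1} F)) {a..s}"
  proof -
    have "integral {1..0} F = 0" by simp
    then have m2: "((\<lambda>\<tau>. g' \<tau> *\<^sub>R F (g \<tau>)) has_integral (- integral {0..1} F)) {a..s}"
      using main unfolding ga gs by simp
    show ?thesis
      by (rule has_integral_cong[THEN iffD1, OF _ m2]) (auto simp: Fg g'e)
  qed
  then have H: "((\<lambda>\<tau>. (- ((s - a) powr (1 - \<alpha>) / (1 - \<alpha>))) * (- (1 - \<alpha>) / (s - a) powr (1 - \<alpha>) * ((s - \<tau>) powr (-\<alpha>) * f \<tau>))) has_integral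
        (- ((s - a) powr (1 - \<alpha>) / (1 - \<alpha>))) * (- integral {0..1} F)) {a..s}"
    by (rule has_integral_mult_right)
  have KL: "(- ((s - a) powr (1 - \<alpha>) / (1 - \<alpha>))) * (- (1 - \<alpha>) / (s - a) powr (1 - \<alpha>)) = 1"
    using as al by (simp add: field_simps)
  have e1: "(\<lambda>\<tau>. (- ((s - a) powr (1 - \<alpha>) / (1 - \<alpha>))) * (- (1 - \<alpha>) / (s - a) powr (1 - \<alpha>) * ((s - \<tau>) powr (-\<alpha>) * f \<tau>)))
      = (\<lambda>\<tau>. (s - \<tau>) powr (-\<alpha>) * f \<tau>)"
    by (rule ext) (simp only: mult.assoc[symmetric] KL mult_1_left)
  have e2: "(- ((s - a) powr (1 - \<alpha>) / (1 - \<alpha>))) * (- integral {0..1} F) = (s - a) powr (1 - \<alpha>) / (1 - \<alpha>) * integral {0..1} F"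
    by simp
  show ?thesis using H unfolding e1 e2 by (simp add: F_def q_def)
qed


lemma inmap: fixes a b s w :: real
  assumes "a \<le> s" "s \<le> b" "0 \<le> w" "w \<le> 1"
  shows "s - (s - a) * w \<in> {a..b}"
proof -
  have "0 \<le> (s - a) * w" "(s - a) * w \<le> s - a" using assms by (auto intro: mult_left_le)
  then show ?thesis unfolding atLeastAtMost_iff using assms by linarith
qed

lemma powr_01: fixes v q :: real assumes "v \<in> {0..1}" "q > 0"
  shows "0 \<le> v powr q" "v powr q \<le> 1"
  using assms by (auto intro!: powr_le1)

lemma inner_cont:
  fixes a q :: real and S :: "real set" and h :: "real \<Rightarrow> real"
  assumes "q > 0" "continuous_on ({a..b} \<times> {0..1}) (\<lambda>p. h (fst p))"
  shows "continuous_on ({a..b} \<times> {0..1}) (\<lambda>p. fst p - (fst p - a) * snd p powr q)"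
  using assms by (intro continuous_intros continuous_on_powr') auto

lemma P_deriv:
  fixes x X1 :: "real \<Rightarrow> real" and a b q t :: real
  assumes q0: "q > 0"
    and xd: "\<And>\<tau>. \<tau> \<in> {a..b} \<Longrightarrow> (x has_real_derivative X1 \<tau>) (at \<tau> within {a..b})"
    and X1c: "continuous_on {a..b} X1" and xc: "continuous_on {a..b} x" and t: "t \<in> {a..b}"
  shows "((\<lambda>s. integral {0..1} (\<lambda>v. x (s - (s - a) * v powr q))) has_real_derivative
          integral {0..1} (\<lambda>v. X1 (t - (t - a) * v powr q) * (1 - v powr q))) (at t within {a..b})"
proof -
  have fx: "((\<lambda>s. x (s - (s - a) * v powr q)) has_field_derivative X1 (s - (s - a) * v powr q) * (1 - v powr q)) (at s within {a..b})"
    if s: "s \<in> {a..b}" and v: "v \<in> cbox 0 1" for s v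
  proof -
    define w where "w = v powr q"
    have w: "0 \<le> w" "w \<le> 1" using powr_01[of v q] v q0 by (auto simp: w_def)
    define \<phi> where "\<phi> = (\<lambda>s. s - (s - a) * w)"
    have im: "\<phi> ` {a..b} \<subseteq> {a..b}" using inmap w by (auto simp: \<phi>_def)
    have "(x has_field_derivative X1 (\<phi> s)) (at (\<phi> s) within (\<phi> ` {a..b}))"
      by (rule DERIV_subset[OF xd im]) (use im s in blast)
    moreover have "(\<phi> has_field_derivative (1 - w)) (at s within {a..b})"
      unfolding \<phi>_def by (auto intro!: derivative_eq_intros)
    ultimately have "(x \<circ> \<phi> has_field_derivative X1 (\<phi> s) * (1 - w)) (at s within {a..b})"
      by (rule DERIV_image_chain)
    then show ?thesis by (simp add: o_def \<phi>_def w_def)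
  qed
  have cinner: "continuous_on ({a..b} \<times> {0..1}) (\<lambda>p. fst p - (fst p - a) * snd p powr q)"
    using q0 by (intro continuous_intros continuous_on_powr') auto
  have iminner: "(\<lambda>p. fst p - (fst p - a) * snd p powr q) ` ({a..b} \<times> {0..1}) \<subseteq> {a..b}"
    using inmap powr_01 q0 by fastforce
  have cfx: "continuous_on ({a..b} \<times> cbox 0 1) (\<lambda>(s, v). X1 (s - (s - a) * v powr q) * (1 - v powr q))"
  proof -
    have "continuous_on ({a..b} \<times> {0..1}) (\<lambda>p. X1 (fst p - (fst p - a) * snd p powr q))"
      by (rule continuous_on_compose2[OF X1c cinner iminner])
    moreover have "continuous_on ({a..b} \<times> {0..1}) (\<lambda>p. 1 - snd p powr q)"
      using q0 by (intro continuous_intros continuous_on_powr') auto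
    ultimately have "continuous_on ({a..b} \<times> {0..1}) (\<lambda>p. X1 (fst p - (fst p - a) * snd p powr q) * (1 - snd p powr q))"
      by (rule continuous_on_mult)
    then show ?thesis by (simp add: case_prod_unfold)
  qed
  have int: "(\<lambda>v. x (s - (s - a) * v powr q)) integrable_on cbox 0 1" if s: "s \<in> {a..b}" for s
  proof -
    have c1: "continuous_on {0..1} (\<lambda>v. s - (s - a) * v powr q)"
      using q0 by (intro continuous_intros continuous_on_powr') auto
    have "(\<lambda>v. s - (s - a) * v powr q) ` {0..1} \<subseteq> {a..b}" using inmap powr_01 q0 s by fastforce
    then have "continuous_on {0..1} (\<lambda>v. x (s - (s - a) * v powr q))"
      by (rule continuous_on_compose2[OF xc c1])
    then show ?thesis by (simp add: integrable_continuous_interval)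
  qed
  have "((\<lambda>s. integral (cbox 0 1) (\<lambda>v. x (s - (s - a) * v powr q))) has_field_derivative
          integral (cbox 0 1) (\<lambda>v. X1 (t - (t - a) * v powr q) * (1 - v powr q))) (at t within {a..b})"
    by (rule leibniz_rule_field_derivative[OF fx int cfx t]) auto
  then show ?thesis by simp
qed

lemma P_parts:
  fixes x X1 :: "real \<Rightarrow> real" and a b q t :: real
  assumes q1: "q > 1" and ab: "a < t" "t \<le> b"
    and xd: "\<And>\<tau>. \<tau> \<in> {a..b} \<Longrightarrow> (x has_real_derivative X1 \<tau>) (at \<tau> within {a..b})"
    and X1c: "continuous_on {a..b} X1" and xc: "continuous_on {a..b} x"
  shows "integral {0..1} (\<lambda>v. x (t - (t - a) * v powr q)) - x a
         = q * (t - a) * integral {0..1} (\<lambda>v. X1 (t - (t - a) * v powr q) * v powr q)"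
proof -
  have q0: "q > 0" using q1 by simp
  define h where "h = t - a"
  have h0: "h > 0" using ab by (simp add: h_def)
  have imv: "(\<lambda>v. t - h * v powr q) ` {0..1} \<subseteq> {a..b}" using inmap powr_01 q0 ab unfolding h_def by fastforce
  have c1: "continuous_on {0..1} (\<lambda>v. t - h * v powr q)"
    using q0 by (intro continuous_intros continuous_on_powr') auto
  have cx: "continuous_on {0..1} (\<lambda>v. x (t - h * v powr q))" by (rule continuous_on_compose2[OF xc c1 imv])
  have cX: "continuous_on {0..1} (\<lambda>v. X1 (t - h * v powr q))" by (rule continuous_on_compose2[OF X1c c1 imv])
  have cq: "continuous_on {0..1} (\<lambda>v. v powr q)"
    using q0 by (intro continuous_intros continuous_on_powr') auto
  have der: "((\<lambda>v. v * x (t - h * v powr q)) has_vector_derivative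
              (x (t - h * v powr q) - q * h * (X1 (t - h * v powr q) * v powr q))) (at v)"
    if v: "v \<in> {0<..<1}" for v
  proof -
    have vp: "0 < v" "v < 1" using v by auto
    have "0 < v powr q" using vp by simp
    moreover have "v powr q < 1 powr q" using vp q0 by (intro powr_less_mono2) auto
    ultimately have "0 < v powr q" "v powr q < 1" by auto
    then have "0 < h * v powr q" "h * v powr q < h * 1" using h0 by (auto intro!: mult_strict_left_mono)
    then have u: "t - h * v powr q \<in> {a<..<b}" unfolding greaterThanLessThan_iff using ab h_def by linarith
    then have xder: "(x has_real_derivative X1 (t - h * v powr q)) (at (t - h * v powr q))"
      using xd[of "t - h * v powr q"] at_within_interior[of "t - h * v powr q" "{a..b}"] by auto
    then have d1: "((\<lambda>v. x (t - h * v powr q)) has_real_derivative X1 (t - h * v powr q) * (- (h * (q * v powr (q - 1))))) (at v)"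
    proof -
      have "((\<lambda>v. t - h * v powr q) has_real_derivative (- (h * (q * v powr (q - 1))))) (at v)"
        using vp by (auto intro!: derivative_eq_intros)
      then show ?thesis by (rule DERIV_chain2[where g="\<lambda>v. t - h * v powr q", OF xder])
    qed
    have vv: "v * v powr (q - 1) = v powr q"
      using vp by (simp add: powr_diff field_simps)
    have "1 * x (t - h * v powr q) + X1 (t - h * v powr q) * (- (h * (q * v powr (q - 1)))) * v
        = x (t - h * v powr q) - q * h * (X1 (t - h * v powr q) * (v * v powr (q - 1)))"
      by (simp add: algebra_simps)
    also have "\<dots> = x (t - h * v powr q) - q * h * (X1 (t - h * v powr q) * v powr q)"
      by (simp only: vv)
    finally have eq: "1 * x (t - h * v powr q) + X1 (t - h * v powr q) * (- (h * (q * v powr (q - 1)))) * v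
        = x (t - h * v powr q) - q * h * (X1 (t - h * v powr q) * v powr q)" .
    have "((\<lambda>v. v * x (t - h * v powr q)) has_real_derivative
           (x (t - h * v powr q) - q * h * (X1 (t - h * v powr q) * v powr q))) (at v)"
      by (rule DERIV_cong[OF DERIV_mult[OF DERIV_ident d1] eq])
    then show ?thesis unfolding has_real_derivative_iff_has_vector_derivative .
  qed
  have cont: "continuous_on {0..1} (\<lambda>v. v * x (t - h * v powr q))"
    by (intro continuous_intros cx)
  have "((\<lambda>v. x (t - h * v powr q) - q * h * (X1 (t - h * v powr q) * v powr q)) has_integral
         (1 * x (t - h * 1 powr q) - 0 * x (t - h * 0 powr q))) {0..1}"
    by (rule fundamental_theorem_of_calculus_interior[OF _ cont der]) auto
  then have fi: "((\<lambda>v. x (t - h * v powr q) - q * h * (X1 (t - h * v powr q) * v powr q)) has_integral x a) {0..1}"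
    by (simp add: h_def)
  have i1: "(\<lambda>v. x (t - h * v powr q)) integrable_on {0..1}" using cx by (simp add: integrable_continuous_interval)
  have i2: "(\<lambda>v. X1 (t - h * v powr q) * v powr q) integrable_on {0..1}"
    using continuous_on_mult[OF cX cq] by (simp add: integrable_continuous_interval)
  have "integral {0..1} (\<lambda>v. x (t - h * v powr q) - q * h * (X1 (t - h * v powr q) * v powr q))
        = integral {0..1} (\<lambda>v. x (t - h * v powr q)) - q * h * integral {0..1} (\<lambda>v. X1 (t - h * v powr q) * v powr q)"
    by (subst integral_diff[OF i1 integrable_on_mult_right[OF i2]]) simp
  then show ?thesis using fi[THEN integral_unique] by (simp add: h_def)
qed


lemma RL_main:
  fixes x X1 :: "real \<Rightarrow> real" and a b \<alpha> t :: real
  assumes al: "0 < \<alpha>" "\<alpha> < 1" and ab: "a < t" "t \<le> b"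
    and xd: "\<And>\<tau>. \<tau> \<in> {a..b} \<Longrightarrow> (x has_real_derivative X1 \<tau>) (at \<tau> within {a..b})"
    and X1c: "continuous_on {a..b} X1" and xc: "continuous_on {a..b} x"
  shows "((\<lambda>s. integral {a..s} (\<lambda>\<tau>. (s - \<tau>) powr (-\<alpha>) * x \<tau>)) has_real_derivative
          ((t - a) powr (-\<alpha>) * x a + integral {a..t} (\<lambda>\<tau>. (t - \<tau>) powr (-\<alpha>) * X1 \<tau>))) (at t within {a..b})"
proof -
  define q where "q = 1 / (1 - \<alpha>)"
  have q1: "q > 1" using al by (simp add: q_def)
  have q0: "q > 0" using q1 by simp
  define P where "P = (\<lambda>s. integral {0..1} (\<lambda>v. x (s - (s - a) * v powr q)))"
  have eqI: "integral {a..s} (\<lambda>\<tau>. (s - \<tau>) powr (-\<alpha>) * x \<tau>) = (s - a) powr (1 - \<alpha>) * P s / (1 - \<alpha>)"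
    if s: "s \<in> {a..b}" for s
  proof (cases "s = a")
    case True then show ?thesis by simp
  next
    case False
    then have as: "a < s" using s by auto
    have "continuous_on {a..s} x" using xc s by (auto intro: continuous_on_subset)
    from frac_subst[OF al as this] show ?thesis
      unfolding q_def[symmetric] P_def by (simp add: integral_unique)
  qed
  have tin: "t \<in> {a..b}" using ab by auto
  define h where "h = t - a"
  have h0: "h > 0" using ab by (simp add: h_def)
  have d1: "((\<lambda>s. (s - a) powr (1 - \<alpha>)) has_real_derivative (1 - \<alpha>) * (t - a) powr (1 - \<alpha> - 1) * 1) (at t within {a..b})"
    by (rule DERIV_chain2[OF has_real_derivative_powr]) (use ab in \<open>auto intro!: derivative_eq_intros\<close>)
  define J0 where "J0 = integral {0..1} (\<lambda>v. X1 (t - (t - a) * v powr q))"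
  define J1 where "J1 = integral {0..1} (\<lambda>v. X1 (t - (t - a) * v powr q) * v powr q)"
  have d2: "(P has_real_derivative integral {0..1} (\<lambda>v. X1 (t - (t - a) * v powr q) * (1 - v powr q))) (at t within {a..b})"
    unfolding P_def by (rule P_deriv[OF q0 xd X1c xc tin])
  have imv: "(\<lambda>v. t - (t - a) * v powr q) ` {0..1} \<subseteq> {a..b}" using inmap powr_01 q0 ab by fastforce
  have c1: "continuous_on {0..1} (\<lambda>v. t - (t - a) * v powr q)"
    using q0 by (intro continuous_intros continuous_on_powr') auto
  have cX: "continuous_on {0..1} (\<lambda>v. X1 (t - (t - a) * v powr q))" by (rule continuous_on_compose2[OF X1c c1 imv])
  have cq: "continuous_on {0..1} (\<lambda>v. v powr q)"
    using q0 by (intro continuous_intros continuous_on_powr') auto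
  have i0: "(\<lambda>v. X1 (t - (t - a) * v powr q)) integrable_on {0..1}" using cX by (simp add: integrable_continuous_interval)
  have i1: "(\<lambda>v. X1 (t - (t - a) * v powr q) * v powr q) integrable_on {0..1}"
    using continuous_on_mult[OF cX cq] by (simp add: integrable_continuous_interval)
  have Pd: "integral {0..1} (\<lambda>v. X1 (t - (t - a) * v powr q) * (1 - v powr q)) = J0 - J1"
  proof -
    have "integral {0..1} (\<lambda>v. X1 (t - (t - a) * v powr q) * (1 - v powr q))
        = integral {0..1} (\<lambda>v. X1 (t - (t - a) * v powr q) - X1 (t - (t - a) * v powr q) * v powr q)"
      by (simp add: algebra_simps)
    also have "\<dots> = J0 - J1" unfolding J0_def J1_def by (rule integral_diff[OF i0 i1])
    finally show ?thesis .
  qed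
  have Pt: "P t = x a + q * h * J1"
    using P_parts[OF q1 ab xd X1c xc] unfolding P_def J1_def h_def by simp
  have K: "integral {a..t} (\<lambda>\<tau>. (t - \<tau>) powr (-\<alpha>) * X1 \<tau>) = h powr (1 - \<alpha>) / (1 - \<alpha>) * J0"
  proof -
    have "continuous_on {a..t} X1" using X1c ab by (auto intro: continuous_on_subset)
    from frac_subst[OF al ab(1) this] show ?thesis
      unfolding q_def[symmetric] J0_def h_def by (simp add: integral_unique)
  qed
  have dprod: "((\<lambda>s. (s - a) powr (1 - \<alpha>) * P s / (1 - \<alpha>)) has_real_derivative
      ((1 - \<alpha>) * (t - a) powr (1 - \<alpha> - 1) * 1 * P t + (J0 - J1) * (t - a) powr (1 - \<alpha>)) / (1 - \<alpha>)) (at t within {a..b})"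
    using DERIV_cdivide[OF DERIV_mult[OF d1 d2], of "1 - \<alpha>"] unfolding Pd .
  have val: "((1 - \<alpha>) * (t - a) powr (1 - \<alpha> - 1) * 1 * P t + (J0 - J1) * (t - a) powr (1 - \<alpha>)) / (1 - \<alpha>)
      = (t - a) powr (-\<alpha>) * x a + integral {a..t} (\<lambda>\<tau>. (t - \<tau>) powr (-\<alpha>) * X1 \<tau>)"
  proof -
    have hp: "h powr (1 - \<alpha>) = h * h powr (-\<alpha>)"
      using h0 by (simp add: powr_add[of h 1 "-\<alpha>", simplified])
    have alg: "(c * H * (xa + (1 / c) * h * J1) + (J0 - J1) * (h * H)) / c = H * xa + h * H / c * J0"
      if "c \<noteq> 0" for c H xa :: real
      using that by (simp add: field_simps)
    have "1 - \<alpha> \<noteq> 0" using al by simp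
    from alg[OF this, of "h powr (-\<alpha>)" "x a"]
    show ?thesis unfolding K Pt hp q_def by (simp add: h_def[symmetric] hp)
  qed
  have "((\<lambda>s. (s - a) powr (1 - \<alpha>) * P s / (1 - \<alpha>)) has_real_derivative
      ((t - a) powr (-\<alpha>) * x a + integral {a..t} (\<lambda>\<tau>. (t - \<tau>) powr (-\<alpha>) * X1 \<tau>))) (at t within {a..b})"
    using dprod unfolding val .
  then show ?thesis
    by (rule has_field_derivative_transform_within[OF _ zero_less_one tin]) (simp add: eqI)
qed


lemma B_coef_alt:
  fixes \<alpha> :: real assumes al: "0 < \<alpha>" "\<alpha> < 1"
  shows "B_coef \<alpha> k = - (Gamma (real (Suc k) + \<alpha>) / (Gamma \<alpha> * fact (Suc k))) / Gamma (1 - \<alpha>)"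
proof -
  have na: "\<alpha> \<notin> \<int>\<^sub>\<le>\<^sub>0" using al by (auto elim: nonpos_Ints_cases)
  have nma: "- \<alpha> \<notin> \<int>\<^sub>\<le>\<^sub>0"
  proof
    assume "- \<alpha> \<in> \<int>\<^sub>\<le>\<^sub>0"
    then obtain z :: int where z: "- \<alpha> = of_int z" by (auto elim: nonpos_Ints_cases)
    then have "0 < - z" "- z < 1" using al by (metis minus_minus of_int_0_less_iff of_int_minus, metis minus_minus of_int_less_1_iff of_int_minus)
    then show False by linarith
  qed
  have g1: "Gamma (1 + \<alpha>) = \<alpha> * Gamma \<alpha>" using Gamma_plus1[OF na] by (simp add: add.commute)
  have g2: "Gamma (1 - \<alpha>) = - \<alpha> * Gamma (- \<alpha>)" using Gamma_plus1[OF nma] by (simp add: add.commute)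
  have "Gamma \<alpha> > 0" using al by simp
  moreover have "Gamma (1 - \<alpha>) > 0" using al by simp
  ultimately show ?thesis unfolding B_coef_def g1 using al
    by (simp add: g2 field_simps add_ac)
qed

lemma V_fun_parts:
  fixes x X1 :: "real \<Rightarrow> real" and a b t :: real
  assumes ab: "a < t" "t \<le> b"
    and xd: "\<And>\<tau>. \<tau> \<in> {a..b} \<Longrightarrow> (x has_real_derivative X1 \<tau>) (at \<tau> within {a..b})"
    and X1c: "continuous_on {a..b} X1" and xc: "continuous_on {a..b} x"
  shows "V_fun a x k t = (t - a) ^ (k + 1) * x t - integral {a..t} (\<lambda>\<tau>. (\<tau> - a) ^ (k + 1) * X1 \<tau>)"
proof -
  have sub: "{a..t} \<subseteq> {a..b}" using ab by auto
  have der: "((\<lambda>\<tau>. (\<tau> - a) ^ (k + 1) * x \<tau>) has_vector_derivative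
      (real (k + 1) * (\<tau> - a) ^ k * x \<tau> + (\<tau> - a) ^ (k + 1) * X1 \<tau>)) (at \<tau> within {a..t})" if "\<tau> \<in> {a..t}" for \<tau>
  proof -
    have xd': "(x has_real_derivative X1 \<tau>) (at \<tau> within {a..t})"
      using DERIV_subset[OF xd sub] that sub by blast
    have "((\<lambda>\<tau>. (\<tau> - a) ^ (k + 1) * x \<tau>) has_real_derivative
      (real (k + 1) * (\<tau> - a) ^ k * x \<tau> + (\<tau> - a) ^ (k + 1) * X1 \<tau>)) (at \<tau> within {a..t})"
    proof -
      have pd: "((\<lambda>\<tau>. (\<tau> - a) ^ (k + 1)) has_real_derivative real (k + 1) * (\<tau> - a) ^ k) (at \<tau> within {a..t})"
        by (rule DERIV_cong[OF DERIV_power[OF DERIV_diff[OF DERIV_ident DERIV_const]]]) simp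
      show ?thesis by (rule DERIV_cong[OF DERIV_mult[OF pd xd']]) (simp add: algebra_simps)
    qed
    then show ?thesis unfolding has_real_derivative_iff_has_vector_derivative .
  qed
  have FT: "((\<lambda>\<tau>. real (k + 1) * (\<tau> - a) ^ k * x \<tau> + (\<tau> - a) ^ (k + 1) * X1 \<tau>) has_integral
      ((t - a) ^ (k + 1) * x t - (a - a) ^ (k + 1) * x a)) {a..t}"
    by (rule fundamental_theorem_of_calculus[OF _ der]) (use ab in auto)
  have c1: "continuous_on {a..t} (\<lambda>\<tau>. (\<tau> - a) ^ k * x \<tau>)"
    using continuous_on_subset[OF xc sub] by (intro continuous_intros)
  have c2: "continuous_on {a..t} (\<lambda>\<tau>. (\<tau> - a) ^ (k + 1) * X1 \<tau>)"
    using continuous_on_subset[OF X1c sub] by (intro continuous_intros)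
  have i1: "(\<lambda>\<tau>. (\<tau> - a) ^ k * x \<tau>) integrable_on {a..t}" using c1 by (simp add: integrable_continuous_interval)
  have i2: "(\<lambda>\<tau>. (\<tau> - a) ^ (k + 1) * X1 \<tau>) integrable_on {a..t}" using c2 by (simp add: integrable_continuous_interval)
  have "integral {a..t} (\<lambda>\<tau>. real (k + 1) * ((\<tau> - a) ^ k * x \<tau>) + (\<tau> - a) ^ (k + 1) * X1 \<tau>)
     = real (k + 1) * integral {a..t} (\<lambda>\<tau>. (\<tau> - a) ^ k * x \<tau>) + integral {a..t} (\<lambda>\<tau>. (\<tau> - a) ^ (k + 1) * X1 \<tau>)"
    by (subst integral_add[OF integrable_on_mult_right[OF i1] i2]) simp
  moreover have "integral {a..t} (\<lambda>\<tau>. real (k + 1) * ((\<tau> - a) ^ k * x \<tau>) + (\<tau> - a) ^ (k + 1) * X1 \<tau>)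
      = (t - a) ^ (k + 1) * x t"
    using FT[THEN integral_unique] by (simp add: mult.assoc)
  ultimately show ?thesis unfolding V_fun_def by simp
qed

lemma term_alt:
  fixes x X1 :: "real \<Rightarrow> real" and a b t \<alpha> :: real
  assumes al: "0 < \<alpha>" "\<alpha> < 1" and ab: "a < t" "t \<le> b"
    and xd: "\<And>\<tau>. \<tau> \<in> {a..b} \<Longrightarrow> (x has_real_derivative X1 \<tau>) (at \<tau> within {a..b})"
    and X1c: "continuous_on {a..b} X1" and xc: "continuous_on {a..b} x"
  shows "- B_coef \<alpha> k * (t - a) powr (-\<alpha>) * x t + B_coef \<alpha> k * (t - a) powr (- real (k + 1) - \<alpha>) * V_fun a x k t
     = (t - a) powr (-\<alpha>) / Gamma (1 - \<alpha>) * (Gamma (real (Suc k) + \<alpha>) / (Gamma \<alpha> * fact (Suc k))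
         * integral {a..t} (\<lambda>\<tau>. ((\<tau> - a) / (t - a)) ^ (k + 1) * X1 \<tau>))"
proof -
  define h where "h = t - a"
  have h0: "h > 0" using ab by (simp add: h_def)
  define J where "J = integral {a..t} (\<lambda>\<tau>. (\<tau> - a) ^ (k + 1) * X1 \<tau>)"
  have V: "V_fun a x k t = h ^ (k + 1) * x t - J" unfolding h_def J_def by (rule V_fun_parts[OF ab xd X1c xc])
  have Jd: "integral {a..t} (\<lambda>\<tau>. ((\<tau> - a) / h) ^ (k + 1) * X1 \<tau>) = J / h ^ (k + 1)"
  proof -
    have "integral {a..t} (\<lambda>\<tau>. ((\<tau> - a) / h) ^ (k + 1) * X1 \<tau>) = integral {a..t} (\<lambda>\<tau>. (\<tau> - a) ^ (k + 1) * X1 \<tau> / h ^ (k + 1))"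
      by (simp add: power_divide h_def)
    also have "\<dots> = J / h ^ (k + 1)" unfolding J_def by simp
    finally show ?thesis .
  qed
  have pw: "h powr (- real (k + 1) - \<alpha>) = h powr (-\<alpha>) / h ^ (k + 1)"
    using h0 by (simp add: powr_diff powr_realpow powr_minus divide_inverse)
  define C where "C = Gamma (real (Suc k) + \<alpha>) / (Gamma \<alpha> * fact (Suc k))"
  have B: "B_coef \<alpha> k = - C / Gamma (1 - \<alpha>)" unfolding C_def by (rule B_coef_alt[OF al])
  have hk: "h ^ (k + 1) > 0" using h0 by simp
  have alg: "- (- C / G) * H * X + (- C / G) * (H / P) * (P * X - J) = H / G * (C * (J / P))"
    if "P > 0" "G \<noteq> 0" for C G H X J P :: real
    using that by (simp add: field_simps)
  have "Gamma (1 - \<alpha>) > 0" using al by (intro Gamma_real_pos) simp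
  then have G0: "Gamma (1 - \<alpha>) \<noteq> 0" by simp
  show ?thesis unfolding h_def[symmetric] Jd B V pw C_def[symmetric]
    by (rule alg[OF hk G0])
qed

lemma series_dc:
  fixes X1 :: "real \<Rightarrow> real" and a t \<alpha> h :: real
  assumes al: "0 < \<alpha>" "\<alpha> < 1" and at: "a < t" and hdef: "h = t - a"
    and X1c: "continuous_on {a..t} X1"
  shows "(\<lambda>k. Gamma (real (Suc k) + \<alpha>) / (Gamma \<alpha> * fact (Suc k)) * integral {a..t} (\<lambda>\<tau>. ((\<tau> - a) / h) ^ (k + 1) * X1 \<tau>)) sums
         integral {a..t} (\<lambda>\<tau>. (((t - \<tau>) / h) powr (-\<alpha>) - 1) * X1 \<tau>)"
proof -
  define c where "c = (\<lambda>m::nat. Gamma (real m + \<alpha>) / (Gamma \<alpha> * fact m))"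
  have c0: "c m \<ge> 0" for m using al unfolding c_def by (intro divide_nonneg_pos) (auto intro: less_imp_le)
  have "Gamma \<alpha> > 0" using al by simp
  then have cz: "c 0 = 1" unfolding c_def by simp
  have h0: "h > 0" using at hdef by simp
  obtain M where M: "\<And>\<tau>. \<tau> \<in> {a..t} \<Longrightarrow> \<bar>X1 \<tau>\<bar> \<le> M"
    using compact_imp_bounded[OF compact_continuous_image[OF X1c compact_Icc]]
    unfolding bounded_iff by (metis atLeastAtMost_iff image_eqI real_norm_def)
  define S where "S = {a<..<t}"
  define f where "f = (\<lambda>N \<tau>. \<Sum>k<N. c (Suc k) * (((\<tau> - a) / h) ^ (k + 1) * X1 \<tau>))"
  define g where "g = (\<lambda>\<tau>. (((t - \<tau>) / h) powr (-\<alpha>) - 1) * X1 \<tau>)"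
  define H where "H = (\<lambda>\<tau>. M * (((t - \<tau>) / h) powr (-\<alpha>) - 1))"
  have ser: "(\<lambda>k. c (Suc k) * ((\<tau> - a) / h) ^ (k + 1)) sums (((t - \<tau>) / h) powr (-\<alpha>) - 1)" if "\<tau> \<in> S" for \<tau>
  proof -
    define r where "r = (\<tau> - a) / h"
    have r: "0 \<le> r" "r < 1" using that h0 hdef unfolding r_def S_def by (auto simp: field_simps)
    have "(\<lambda>m. c m * r ^ m) sums (1 - r) powr (-\<alpha>)" unfolding c_def by (rule binom_sums[OF al(1) r])
    then have "(\<lambda>k. c (Suc k) * r ^ (Suc k)) sums ((1 - r) powr (-\<alpha>) - 1)"
      by (subst sums_Suc_iff) (simp add: cz)
    moreover have "1 - r = (t - \<tau>) / h" using h0 hdef unfolding r_def by (simp add: field_simps)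
    ultimately show ?thesis unfolding r_def by simp
  qed
  have conv: "(\<lambda>N. f N \<tau>) \<longlonglongrightarrow> g \<tau>" if "\<tau> \<in> S" for \<tau>
  proof -
    have "(\<lambda>k. c (Suc k) * ((\<tau> - a) / h) ^ (k + 1) * X1 \<tau>) sums ((((t - \<tau>) / h) powr (-\<alpha>) - 1) * X1 \<tau>)"
      by (rule sums_mult2[OF ser[OF that]])
    then show ?thesis unfolding sums_def f_def g_def by (simp add: mult.assoc)
  qed
  have le: "norm (f N \<tau>) \<le> H \<tau>" if "\<tau> \<in> S" for N \<tau>
  proof -
    have r: "0 \<le> (\<tau> - a) / h" using that h0 unfolding S_def by auto
    have Mt: "\<bar>X1 \<tau>\<bar> \<le> M" using M that unfolding S_def by auto
    have "norm (f N \<tau>) \<le> (\<Sum>k<N. \<bar>c (Suc k) * (((\<tau> - a) / h) ^ (k + 1) * X1 \<tau>)\<bar>)"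
      unfolding f_def real_norm_def by (rule sum_abs)
    also have "\<dots> \<le> (\<Sum>k<N. c (Suc k) * ((\<tau> - a) / h) ^ (k + 1) * M)"
    proof (rule sum_mono)
      fix k
      have "\<bar>c (Suc k) * (((\<tau> - a) / h) ^ (k + 1) * X1 \<tau>)\<bar> = c (Suc k) * ((\<tau> - a) / h) ^ (k + 1) * \<bar>X1 \<tau>\<bar>"
        by (simp only: abs_mult abs_of_nonneg[OF c0] abs_of_nonneg[OF zero_le_power[OF r]] mult.assoc)
      also have "\<dots> \<le> c (Suc k) * ((\<tau> - a) / h) ^ (k + 1) * M"
        using c0 r Mt by (intro mult_left_mono mult_nonneg_nonneg zero_le_power) auto
      finally show "\<bar>c (Suc k) * (((\<tau> - a) / h) ^ (k + 1) * X1 \<tau>)\<bar> \<le> c (Suc k) * ((\<tau> - a) / h) ^ (k + 1) * M" .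
    qed
    also have "\<dots> = (\<Sum>k<N. c (Suc k) * ((\<tau> - a) / h) ^ (k + 1)) * M" by (simp add: sum_distrib_right)
    also have "\<dots> \<le> (((t - \<tau>) / h) powr (-\<alpha>) - 1) * M"
    proof (rule mult_right_mono)
      show "0 \<le> M" using Mt by linarith
      have "(\<Sum>k<N. c (Suc k) * ((\<tau> - a) / h) ^ (k + 1)) \<le> (\<Sum>k. c (Suc k) * ((\<tau> - a) / h) ^ (k + 1))"
        by (rule sum_le_suminf[OF sums_summable[OF ser[OF that]]]) (use c0 r in \<open>auto intro!: mult_nonneg_nonneg zero_le_power simp del: power_Suc\<close>)
      then show "(\<Sum>k<N. c (Suc k) * ((\<tau> - a) / h) ^ (k + 1)) \<le> ((t - \<tau>) / h) powr (-\<alpha>) - 1"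
        using sums_unique[OF ser[OF that]] by simp
    qed
    finally show ?thesis unfolding H_def by (simp add: mult.commute)
  qed
  have fint: "f N integrable_on S" for N
  proof -
    have "continuous_on {a..t} (f N)" unfolding f_def using X1c h0 by (intro continuous_intros) auto
    then have "f N integrable_on {a..t}" by (simp add: integrable_continuous_interval)
    then show ?thesis unfolding S_def using integrable_on_Icc_iff_Ioo by blast
  qed
  have Hint: "H integrable_on S"
  proof -
    note frac_subst[OF al at continuous_on_const[of _ 1]]
    then have i1: "(\<lambda>\<tau>. (t - \<tau>) powr (-\<alpha>)) integrable_on {a..t}" by auto
    have "(\<lambda>\<tau>. M * h powr \<alpha> * (t - \<tau>) powr (-\<alpha>) - M) integrable_on {a..t}"
      by (intro integrable_diff integrable_on_mult_right i1 integrable_const_ivl)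
    then have "H integrable_on {a..t}"
      by (rule integrable_eq) (use h0 in \<open>simp add: H_def powr_divide powr_minus field_simps\<close>)
    then show ?thesis unfolding S_def using integrable_on_Icc_iff_Ioo by blast
  qed
  have lim: "(\<lambda>N. integral S (f N)) \<longlonglongrightarrow> integral S g"
    by (rule dominated_convergence(2)[OF fint Hint le conv])
  have eqN: "integral S (f N) = (\<Sum>k<N. c (Suc k) * integral {a..t} (\<lambda>\<tau>. ((\<tau> - a) / h) ^ (k + 1) * X1 \<tau>))" for N
  proof -
    have ik: "(\<lambda>\<tau>. c (Suc k) * (((\<tau> - a) / h) ^ (k + 1) * X1 \<tau>)) integrable_on {a..t}" for k
    proof -
      have "continuous_on {a..t} (\<lambda>\<tau>. c (Suc k) * (((\<tau> - a) / h) ^ (k + 1) * X1 \<tau>))" using X1c h0 by (intro continuous_intros) auto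
      then show ?thesis by (simp add: integrable_continuous_interval)
    qed
    have "integral S (f N) = integral {a..t} (f N)" unfolding S_def by (simp add: integral_open_interval_real)
    also have "\<dots> = (\<Sum>k<N. integral {a..t} (\<lambda>\<tau>. c (Suc k) * (((\<tau> - a) / h) ^ (k + 1) * X1 \<tau>)))"
      unfolding f_def by (intro integral_sum finite_lessThan ik)
    also have "\<dots> = (\<Sum>k<N. c (Suc k) * integral {a..t} (\<lambda>\<tau>. ((\<tau> - a) / h) ^ (k + 1) * X1 \<tau>))" by simp
    finally show ?thesis .
  qed
  have "integral S g = integral {a..t} g" unfolding S_def by (simp add: integral_open_interval_real)
  then show ?thesis using lim unfolding sums_def eqN g_def c_def by simp
qed


theorem theorem5p3:
  fixes a b \<alpha> t :: real and n :: nat and x :: "real \<Rightarrow> real" and D :: "nat \<Rightarrow> real \<Rightarrow> real"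
  assumes "a < b" and "0 < \<alpha>" and "\<alpha> < 1" and "1 \<le> n"
    and "Cn_on n a b x D"
    and "t \<in> {a<..b}"
  shows "(\<forall>i\<in>{1..n-1}. summable (\<lambda>k. Gamma (real k + 1 - real i + \<alpha>) / (Gamma (\<alpha> - real i) * fact (k + 1))))
    \<and> summable (\<lambda>k. - B_coef \<alpha> k * (t - a) powr (-\<alpha>) * x t
                     + B_coef \<alpha> k * (t - a) powr (- real (k + 1) - \<alpha>) * V_fun a x k t)
    \<and> RL_deriv_at a b \<alpha> x t
        (1 / Gamma (1 - \<alpha>) * (t - a) powr (-\<alpha>) * x t
         + (\<Sum>i = 1..n-1. A_coef n \<alpha> i * (t - a) powr (real i - \<alpha>) * D i t)
         + (\<Sum>k. - B_coef \<alpha> k * (t - a) powr (-\<alpha>) * x t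
                 + B_coef \<alpha> k * (t - a) powr (- real (k + 1) - \<alpha>) * V_fun a x k t))"
proof -
  note ab = assms(1) and al = assms(2,3) and n1 = assms(4) and Cn = assms(5)
  have at: "a < t" "t \<le> b" using assms(6) by auto
  have D0: "\<And>\<tau>. \<tau> \<in> {a..b} \<Longrightarrow> D 0 \<tau> = x \<tau>"
    and Dd: "\<And>i \<tau>. i < n \<Longrightarrow> \<tau> \<in> {a..b} \<Longrightarrow> (D i has_real_derivative D (Suc i) \<tau>) (at \<tau> within {a..b})"
    and Dc: "continuous_on {a..b} (D n)"
    using Cn unfolding Cn_on_def by auto
  define X1 where "X1 = D 1"
  have xd: "(x has_real_derivative X1 \<tau>) (at \<tau> within {a..b})" if "\<tau> \<in> {a..b}" for \<tau>
    using has_field_derivative_transform_within[OF Dd[of 0 \<tau>] zero_less_one that] n1 that D0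
    unfolding X1_def by simp
  have X1c: "continuous_on {a..b} X1"
  proof (cases "n = 1")
    case True then show ?thesis using Dc unfolding X1_def by simp
  next
    case False
    then have "1 < n" using n1 by simp
    then show ?thesis unfolding X1_def by (intro DERIV_continuous_on[of _ _ "D 2"]) (use Dd in \<open>auto simp: numeral_2_eq_2\<close>)
  qed
  have xc: "continuous_on {a..b} x" by (rule DERIV_continuous_on[OF xd])
  define h where "h = t - a"
  have h0: "h > 0" using at by (simp add: h_def)
  have Asums: "(\<lambda>k. Gamma (real k + 1 - real i + \<alpha>) / (Gamma (\<alpha> - real i) * fact (k + 1))) sums (-1)" if "i \<in> {1..n-1}" for i
    using A_series_sums[OF al] that by auto
  have A0: "A_coef n \<alpha> i = 0" if "i \<in> {1..n-1}" for i
    unfolding A_coef_def using sums_unique[OF Asums[OF that]] by simp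
  have Asum0: "(\<Sum>i = 1..n-1. A_coef n \<alpha> i * (t - a) powr (real i - \<alpha>) * D i t) = 0"
    using A0 by simp
  have X1ct: "continuous_on {a..t} X1" using X1c at by (auto intro: continuous_on_subset)
  define K where "K = integral {a..t} (\<lambda>\<tau>. (t - \<tau>) powr (-\<alpha>) * X1 \<tau>)"
  define Sv where "Sv = h powr (-\<alpha>) / Gamma (1 - \<alpha>) * integral {a..t} (\<lambda>\<tau>. (((t - \<tau>) / h) powr (-\<alpha>) - 1) * X1 \<tau>)"
  have Ssums: "(\<lambda>k. - B_coef \<alpha> k * (t - a) powr (-\<alpha>) * x t
                     + B_coef \<alpha> k * (t - a) powr (- real (k + 1) - \<alpha>) * V_fun a x k t) sums Sv"
  proof -
    have "(\<lambda>k. h powr (-\<alpha>) / Gamma (1 - \<alpha>) * (Gamma (real (Suc k) + \<alpha>) / (Gamma \<alpha> * fact (Suc k)) * integral {a..t} (\<lambda>\<tau>. ((\<tau> - a) / h) ^ (k + 1) * X1 \<tau>))) sums Sv"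
      unfolding Sv_def by (rule sums_mult[OF series_dc[OF al at(1) h_def X1ct]])
    then show ?thesis
      using term_alt[OF al at xd X1c xc] unfolding h_def by simp
  qed
  have F4: "integral {a..t} (\<lambda>\<tau>. (((t - \<tau>) / h) powr (-\<alpha>) - 1) * X1 \<tau>) = h powr \<alpha> * K - (x t - x a)"
  proof -
    have Ki: "(\<lambda>\<tau>. (t - \<tau>) powr (-\<alpha>) * X1 \<tau>) integrable_on {a..t}"
      using frac_subst[OF al at(1) X1ct] by blast
    have Xi: "(X1 has_integral (x t - x a)) {a..t}"
    proof (rule fundamental_theorem_of_calculus)
      show "a \<le> t" using at by simp
      fix \<tau> assume "\<tau> \<in> {a..t}"
      then have "(x has_real_derivative X1 \<tau>) (at \<tau> within {a..t})"
        using DERIV_subset[OF xd, of \<tau> "{a..t}"] at by auto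
      then show "(x has_vector_derivative X1 \<tau>) (at \<tau> within {a..t})"
        unfolding has_real_derivative_iff_has_vector_derivative .
    qed
    have "integral {a..t} (\<lambda>\<tau>. (((t - \<tau>) / h) powr (-\<alpha>) - 1) * X1 \<tau>)
        = integral {a..t} (\<lambda>\<tau>. h powr \<alpha> * ((t - \<tau>) powr (-\<alpha>) * X1 \<tau>) - X1 \<tau>)"
      by (rule integral_cong) (use h0 in \<open>simp add: powr_divide powr_minus field_simps\<close>)
    also have "\<dots> = h powr \<alpha> * K - (x t - x a)"
      using integral_diff[OF integrable_on_mult_right[OF Ki] has_integral_integrable[OF Xi]] Xi[THEN integral_unique]
      unfolding K_def by simp
    finally show ?thesis .
  qed
  have Sval: "Sv = (h powr (-\<alpha>) * (x a - x t) + K) / Gamma (1 - \<alpha>)"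
  proof -
    have "h powr (-\<alpha>) * h powr \<alpha> = 1" using h0 by (simp add: powr_minus)
    then show ?thesis unfolding Sv_def F4 by (simp add: field_simps)
  qed
  have "Gamma (1 - \<alpha>) > 0" using al by (intro Gamma_real_pos) simp
  then have G0: "Gamma (1 - \<alpha>) \<noteq> 0" by simp
  have RL: "((\<lambda>s. integral {a..s} (\<lambda>\<tau>. (s - \<tau>) powr (-\<alpha>) * x \<tau>)) has_real_derivative
          (h powr (-\<alpha>) * x a + K)) (at t within {a..b})"
    using RL_main[OF al at xd X1c xc] unfolding h_def K_def .
  have "((\<lambda>s. (1 / Gamma (1 - \<alpha>)) * integral {a..s} (\<lambda>\<tau>. (s - \<tau>) powr (-\<alpha>) * x \<tau>)) has_real_derivative
          (1 / Gamma (1 - \<alpha>)) * (h powr (-\<alpha>) * x a + K)) (at t within {a..b})"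
    by (rule DERIV_cmult[OF RL])
  moreover have "(1 / Gamma (1 - \<alpha>)) * (h powr (-\<alpha>) * x a + K)
      = 1 / Gamma (1 - \<alpha>) * (t - a) powr (-\<alpha>) * x t
         + (\<Sum>i = 1..n-1. A_coef n \<alpha> i * (t - a) powr (real i - \<alpha>) * D i t)
         + (\<Sum>k. - B_coef \<alpha> k * (t - a) powr (-\<alpha>) * x t
                 + B_coef \<alpha> k * (t - a) powr (- real (k + 1) - \<alpha>) * V_fun a x k t)"
    unfolding Asum0 sums_unique[OF Ssums, symmetric] Sval
    using G0 by (simp add: h_def field_simps)
  ultimately have "RL_deriv_at a b \<alpha> x t
        (1 / Gamma (1 - \<alpha>) * (t - a) powr (-\<alpha>) * x t
         + (\<Sum>i = 1..n-1. A_coef n \<alpha> i * (t - a) powr (real i - \<alpha>) * D i t)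
         + (\<Sum>k. - B_coef \<alpha> k * (t - a) powr (-\<alpha>) * x t
                 + B_coef \<alpha> k * (t - a) powr (- real (k + 1) - \<alpha>) * V_fun a x k t))"
    unfolding RL_deriv_at_def by simp
  moreover have "\<forall>i\<in>{1..n-1}. summable (\<lambda>k. Gamma (real k + 1 - real i + \<alpha>) / (Gamma (\<alpha> - real i) * fact (k + 1)))"
    using Asums sums_summable by blast
  ultimately show ?thesis using sums_summable[OF Ssums] by blast
qed

end
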